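(* Let $k\ge 3$ be an integer and let $0<r\le \log k/k$ (natural logarithm). Define, for $\mu\in[0,1]$, \[ G(\mu)=k^{1-k}(k-1-\mu)^{k-2}\bigl(k(1-\mu+\mu^2)-1\bigr), \] \[ t(\mu)=\Bigl(\tfrac{1-\mu}{k}\Bigr)^{\frac{1-\mu}{k}}\Bigl(\tfrac{\mu}{k}\Bigr)^{\frac{2\mu}{k}}\Bigl(1-\tfrac{1}{k}-\tfrac{\mu}{k}\Bigr)^{1-\frac1k-\frac{\mu}{k}} \] (with the convention $0^0=1$), and $\Gamma_r(\mu)=G(\mu)^r/t(\mu)$. Let $g(\delta)=k\delta(1-\delta)^{k-1}$ and \[ \gamma_r=\frac{g(1/k)^r}{(1/k)^{1/k}(1-1/k)^{1-1/k}} . \] Then for every $\mu\in[0,1]$, $\Gamma_r(\mu)\le \gamma_r^2$. *)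

theory Defs
  imports Complex_Main
begin

definition pw :: "real \<Rightarrow> real \<Rightarrow> real" where
  "pw x y = (if y = 0 then 1 else x powr y)"

definition Gfun :: "nat \<Rightarrow> real \<Rightarrow> real" where
  "Gfun k \<mu> = real k powr (1 - real k) * (real k - 1 - \<mu>) ^ (k - 2)
              * (real k * (1 - \<mu> + \<mu>^2) - 1)"

definition tfun :: "nat \<Rightarrow> real \<Rightarrow> real" where
  "tfun k \<mu> = pw ((1 - \<mu>) / real k) ((1 - \<mu>) / real k)
             * pw (\<mu> / real k) (2 * \<mu> / real k)
             * pw (1 - 1 / real k - \<mu> / real k) (1 - 1 / real k - \<mu> / real k)"

definition Gamma_r :: "nat \<Rightarrow> real \<Rightarrow> real \<Rightarrow> real" where
  "Gamma_r k r \<mu> = Gfun k \<mu> powr r / tfun k \<mu>"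

definition gfun :: "nat \<Rightarrow> real \<Rightarrow> real" where
  "gfun k \<delta> = real k * \<delta> * (1 - \<delta>) ^ (k - 1)"

definition gamma_r :: "nat \<Rightarrow> real \<Rightarrow> real" where
  "gamma_r k r = gfun k (1 / real k) powr r
     / ((1 / real k) powr (1 / real k) * (1 - 1 / real k) powr (1 - 1 / real k))"

end

theory Submission
  imports Defs "HOL-Analysis.Harmonic_Numbers"
begin

lemma P1:
  fixes x :: real assumes "0 < x" "x \<le> 1"
  shows "x * ln x - x + 1 \<ge> (1 - x)^2 / 2"
proof -
  let ?f = "\<lambda>x::real. x * ln x - x + 1 - (1 - x)^2 / 2"
  have "?f x \<ge> ?f 1"
  proof (rule DERIV_nonpos_imp_nonincreasing[OF assms(2)])
    fix y assume y: "x \<le> y" "y \<le> 1"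
    hence yp: "y > 0" using assms by auto
    have "DERIV ?f y :> (ln y + 1 - y)"
      using yp by (auto intro!: derivative_eq_intros simp: power2_eq_square field_simps)
    moreover have "ln y + 1 - y \<le> 0" using ln_le_minus_one[OF yp] by simp
    ultimately show "\<exists>d. DERIV ?f y :> d \<and> d \<le> 0" by blast
  qed
  thus ?thesis by simp
qed

lemma P2:
  fixes x :: real assumes "1 \<le> x"
  shows "x * ln x - x + 1 \<ge> (x - 1)^2 / (2 * x)"
proof -
  let ?f = "\<lambda>x::real. x * ln x - x + 1 - (x - 1)^2 / (2 * x)"
  have "?f 1 \<le> ?f x"
  proof (rule DERIV_nonneg_imp_nondecreasing[OF assms])
    fix y assume y: "1 \<le> y" "y \<le> x"
    hence yp: "y > 0" by auto
    have "DERIV ?f y :> (ln y - (1 - 1 / y^2) / 2)"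
      using yp by (auto intro!: derivative_eq_intros simp: power2_eq_square field_simps)
    moreover have "ln y - (1 - 1 / y^2) / 2 \<ge> 0"
    proof -
      have "ln (1/y) \<le> 1/y - 1" using ln_le_minus_one yp by simp
      hence h: "ln y \<ge> 1 - 1/y" using yp by (simp add: ln_div)
      have "(1 - 1/y^2)/2 \<le> 1 - 1/y" using y yp
      proof -
        have "y * (y - 1)^2 \<ge> 0" using yp by simp
        hence "y * (y * 2) \<le> y + y * (y * y)" by (simp add: algebra_simps power2_eq_square)
        thus ?thesis using yp by (simp add: field_simps power2_eq_square)
      qed
      thus ?thesis using h by simp
    qed
    ultimately show "\<exists>d. DERIV ?f y :> d \<and> 0 \<le> d" by blast
  qed
  thus ?thesis by simp
qed

lemma P3:
  fixes t K :: real assumes "1 < t" "t \<le> K"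
  shows "(t * ln t - t + 1) / (t - 1)^2 \<ge> (K * ln K - K + 1) / (K - 1)^2"
proof -
  let ?f = "\<lambda>x::real. (x * ln x - x + 1) / (x - 1)^2"
  show ?thesis
  proof (rule DERIV_nonpos_imp_nonincreasing[OF assms(2)])
    fix y assume y: "t \<le> y" "y \<le> K"
    hence yp: "y > 1" using assms by auto
    have "DERIV ?f y :> ((ln y * (y-1)^2 - (y*ln y - y + 1) * (2*(y-1))) / ((y-1)^2)^2)"
      using yp by (auto intro!: derivative_eq_intros)
    moreover have "(ln y * (y-1)^2 - (y*ln y - y + 1) * (2*(y-1))) / ((y-1)^2)^2 \<le> 0"
    proof -
      have "ln y - ln 1 \<ge> 2 * (y - 1) / (1 + y)" using ln_inverse_approx_ge[of 1 y] yp by simp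
      hence "(y + 1) * ln y \<ge> 2 * (y - 1)" using yp by (simp add: field_simps)
      hence "ln y * (y-1)^2 - (y*ln y - y + 1) * (2*(y-1)) = (y - 1) * (2 * (y - 1) - (y + 1) * ln y)"
        by (simp add: algebra_simps power2_eq_square)
      moreover have "(y - 1) * (2 * (y - 1) - (y + 1) * ln y) \<le> 0"
        using yp \<open>(y + 1) * ln y \<ge> 2 * (y - 1)\<close> by (intro mult_nonneg_nonpos) auto
      ultimately show ?thesis by (intro divide_nonpos_nonneg) auto
    qed
    ultimately show "\<exists>d. DERIV ?f y :> d \<and> d \<le> 0" by blast
  qed
qed

definition T :: "real \<Rightarrow> real \<Rightarrow> real" where
  "T p q = (if p = 0 then 0 else p * ln (p / q))"

lemma RC: assumes "0 < p" "0 < q" shows "T p q - (p - q) = q * ((p/q) * ln (p/q) - p/q + 1)"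
  using assms by (simp add: T_def field_simps)

lemma RA: assumes "0 \<le> p" "p \<le> q" "0 < q" shows "T p q - (p - q) \<ge> (p - q)^2 / (2 * q)"
proof (cases "p = 0")
  case True thus ?thesis using assms by (simp add: T_def power2_eq_square)
next
  case False
  hence pp: "p > 0" using assms by auto
  have x: "0 < p/q" "p/q \<le> 1" using pp assms by auto
  have "q * ((p/q) * ln (p/q) - p/q + 1) \<ge> q * ((1 - p/q)^2/2)"
    using P1[OF x] assms by (intro mult_left_mono) auto
  also have "q * ((1 - p/q)^2/2) = (p - q)^2 / (2 * q)" using assms by (simp add: field_simps power2_eq_square)
  finally show ?thesis using RC[OF pp assms(3)] by simp
qed

lemma RB: assumes "q \<le> p" "0 < q" shows "T p q - (p - q) \<ge> (p - q)^2 / (2 * p)"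
proof -
  have pp: "p > 0" using assms by auto
  have x: "1 \<le> p/q" using pp assms by auto
  have "q * ((p/q) * ln (p/q) - p/q + 1) \<ge> q * ((p/q - 1)^2/(2*(p/q)))"
    using P2[OF x] assms by (intro mult_left_mono) auto
  also have "q * ((p/q - 1)^2/(2*(p/q))) = (p - q)^2 / (2 * p)" using assms pp by (simp add: field_simps power2_eq_square)
  finally show ?thesis using RC[OF pp assms(2)] by simp
qed

lemma ln3: "ln (3::real) \<le> 7/6"
proof -
  have "(1 + (7/6) / real (12::nat)) ^ 12 \<le> exp (7/6::real)"
    by (rule exp_ge_one_plus_x_over_n_power_n) auto
  moreover have "(3::real) \<le> (1 + (7/6) / real (12::nat)) ^ 12" by (simp add: power_def)
  ultimately have "3 \<le> exp (7/6::real)" by linarith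
  thus ?thesis by (metis exp_gt_zero ln_exp ln_le_cancel_iff zero_less_numeral)
qed

lemma lnK: fixes K :: real assumes "3 \<le> K" shows "ln K \<le> K/2 - 1/K"
proof -
  have "ln K = ln 3 + ln (K/3)" using assms by (simp add: ln_div)
  also have "ln (K/3) \<le> K/3 - 1" using assms by (intro ln_le_minus_one) auto
  finally have "ln K \<le> 7/6 + K/3 - 1" using ln3 by linarith
  moreover have "7/6 + K/3 - 1 \<le> K/2 - 1/K"
  proof -
    have "3 * K \<le> K * K" using assms by (intro mult_right_mono) auto
    hence "K + 6 \<le> K * K" using assms by linarith
    thus ?thesis using assms by (simp add: field_simps)
  qed
  ultimately show ?thesis by linarith
qed

lemma KLb:
  fixes K \<mu> :: real assumes K: "3 \<le> K" and m: "0 \<le> \<mu>" "\<mu> \<le> 1"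
  shows "ln K * (K - 1 - K*\<mu>)^2 / (K-1)^2 \<le>
    K * (T ((1-\<mu>)/K) (1/K^2) + 2 * T (\<mu>/K) ((K-1)/K^2) + T (1 - 1/K - \<mu>/K) ((K-1)^2/K^2))"
proof -
  define s where "s = K - 1 - K*\<mu>"
  define a where "a = (1-\<mu>)/K"
  define b where "b = \<mu>/K"
  define c where "c = 1 - 1/K - \<mu>/K"
  define qa where "qa = 1/K^2"
  define qb where "qb = (K-1)/K^2"
  define qc where "qc = (K-1)^2/K^2"
  have Kp: "K > 0" "K > 1" "K - 1 > 0" using K by auto
  have da: "a - qa = s/K^2" unfolding a_def qa_def s_def using Kp by (simp add: field_simps power2_eq_square)
  have db: "b - qb = - s/K^2" unfolding b_def qb_def s_def using Kp by (simp add: field_simps power2_eq_square)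
  have dc: "c - qc = s/K^2" unfolding c_def qc_def s_def using Kp by (simp add: field_simps power2_eq_square)
  have qpos: "qa > 0" "qb > 0" "qc > 0" unfolding qa_def qb_def qc_def using Kp by auto
  have "K*\<mu> \<le> K" using m Kp by (simp add: mult_left_le)
  moreover have "3*K \<le> K*K" using K by (intro mult_right_mono) auto
  ultimately have "K + K * \<mu> < K * K" using K by linarith
  hence nonneg: "a \<ge> 0" "b \<ge> 0" "c > 0" unfolding a_def b_def c_def using Kp m
    by (auto simp: field_simps)
  define Ra where "Ra = T a qa - (a - qa)"
  define Rb where "Rb = T b qb - (b - qb)"
  define Rc where "Rc = T c qc - (c - qc)"
  have sumT: "T a qa + 2 * T b qb + T c qc = Ra + 2 * Rb + Rc"
    unfolding Ra_def Rb_def Rc_def using da db dc by simp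
  have sK: "s \<ge> 0 \<Longrightarrow> s/K^2 \<ge> 0" "s < 0 \<Longrightarrow> s/K^2 < 0" using Kp by (auto simp: divide_neg_pos)
  have sq: "(s/K^2)^2 = s^2/K^4" by (simp add: power_divide power_mult[symmetric])
  show ?thesis
  proof (cases "s \<ge> 0")
    case True
    define \<tau> where "\<tau> = K * (1 - \<mu>)"
    have tau: "\<tau> = s + 1" unfolding \<tau>_def s_def by (simp add: algebra_simps)
    have tau1: "1 \<le> \<tau>" using True tau by simp
    have tauK: "\<tau> \<le> K" unfolding \<tau>_def using m Kp by (simp add: mult_left_le)
    have "K * (1 - \<mu>) > 0" using tau1 \<tau>_def by simp
    hence "1 - \<mu> > 0" using Kp by (simp add: zero_less_mult_iff)
    hence ap: "a > 0" unfolding a_def using Kp by simp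
    have aq: "a / qa = \<tau>" unfolding a_def qa_def \<tau>_def using Kp by (simp add: field_simps power2_eq_square)
    define fK where "fK = K * ln K - K + 1"
    have f\<tau>: "\<tau> * ln \<tau> - \<tau> + 1 \<ge> s^2 * fK / (K-1)^2"
    proof (cases "\<tau> = 1")
      case True thus ?thesis using tau by simp
    next
      case False
      hence "1 < \<tau>" using tau1 by simp
      from P3[OF this tauK] have "(\<tau> * ln \<tau> - \<tau> + 1) / (\<tau> - 1)^2 \<ge> fK / (K - 1)^2"
        unfolding fK_def .
      moreover have "(\<tau> - 1)^2 > 0" using \<open>1 < \<tau>\<close> by simp
      ultimately have "(\<tau> * ln \<tau> - \<tau> + 1) \<ge> (\<tau> - 1)^2 * (fK / (K - 1)^2)"
        by (simp add: field_simps)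
      thus ?thesis using tau by simp
    qed
    have Ra: "Ra = qa * (\<tau> * ln \<tau> - \<tau> + 1)" unfolding Ra_def using RC[OF ap qpos(1)] aq by simp
    have Ra': "Ra \<ge> qa * (s^2 * fK / (K-1)^2)" unfolding Ra using f\<tau> qpos by (intro mult_left_mono) auto
    have "b \<le> qb" using db True sK by linarith
    have Rb: "Rb \<ge> (s/K^2)^2 / (2 * qb)" unfolding Rb_def using RA[OF nonneg(2) \<open>b \<le> qb\<close> qpos(2)] db
      by (simp add: power2_eq_square)
    have "qc \<le> c" using dc True sK by linarith
    have "(c - qc)^2 / (2 * c) \<ge> 0" using nonneg by simp
    hence Rc: "Rc \<ge> 0" unfolding Rc_def using RB[OF \<open>qc \<le> c\<close> qpos(3)] by linarith
    have "K * (Ra + 2 * Rb + Rc) \<ge> K * (qa * (s^2 * fK / (K-1)^2) + 2 * ((s/K^2)^2 / (2 * qb)))"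
      using Ra' Rb Rc Kp by (intro mult_left_mono) auto
    also have "K * (qa * (s^2 * fK / (K-1)^2) + 2 * ((s/K^2)^2 / (2 * qb))) = s^2 * (fK + K - 1) / (K * (K-1)^2)"
      unfolding qa_def qb_def sq using Kp apply (simp add: field_simps) by algebra
    also have "s^2 * (fK + K - 1) / (K * (K-1)^2) = ln K * s^2 / (K-1)^2"
      unfolding fK_def using Kp by (simp add: field_simps)
    finally show ?thesis using sumT unfolding s_def a_def b_def c_def qa_def qb_def qc_def by simp
  next
    case False
    have "a \<le> qa" using da False sK by linarith
    have Ra: "Ra \<ge> (s/K^2)^2 / (2 * qa)" unfolding Ra_def using RA[OF nonneg(1) \<open>a \<le> qa\<close> qpos(1)] da
      by (simp add: power2_eq_square)
    have "qb \<le> b" using db False sK by linarith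
    hence bp: "b > 0" using qpos by simp
    have Rb0: "Rb \<ge> (s/K^2)^2 / (2 * b)" unfolding Rb_def using RB[OF \<open>qb \<le> b\<close> qpos(2)] db
      by (simp add: power2_eq_square)
    have "b \<le> 1/K" unfolding b_def using m Kp by (simp add: divide_right_mono)
    hence "(s/K^2)^2 / (2 * b) \<ge> (s/K^2)^2 / (2 * (1/K))" using bp Kp
      by (intro divide_left_mono) (auto intro: mult_pos_pos)
    hence Rb: "Rb \<ge> (s/K^2)^2 / (2 * (1/K))" using Rb0 by linarith
    have "c \<le> qc" using dc False sK by linarith
    have Rc: "Rc \<ge> (s/K^2)^2 / (2 * qc)" unfolding Rc_def using RA[OF _ \<open>c \<le> qc\<close> qpos(3)] nonneg dc
      by (simp add: power2_eq_square)
    have e1: "K * (Ra + 2 * Rb + Rc) \<ge> K * ((s/K^2)^2 / (2 * qa) + 2 * ((s/K^2)^2 / (2 * (1/K))) + (s/K^2)^2 / (2 * qc))"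
      using Ra Rb Rc Kp by (intro mult_left_mono) auto
    have e2: "K * ((s/K^2)^2 / (2 * qa) + 2 * ((s/K^2)^2 / (2 * (1/K))) + (s/K^2)^2 / (2 * qc))
       = s^2 * (1/(2*K) + 1/K^2 + 1/(2*K*(K-1)^2))"
      unfolding qa_def qc_def sq using Kp apply (simp add: field_simps) by algebra
    have i1: "(K/2 - 1/K) / (K-1)^2 = (K^3 - 2*K) / (2*K^2*(K-1)^2)" using Kp by (simp add: field_simps) (algebra?)
    have i2: "(K^3 - 2*K) / (2*K^2*(K-1)^2) \<le> (K^3 - 2*K + 2) / (2*K^2*(K-1)^2)" using Kp by (intro divide_right_mono) auto
    have i3: "(K^3 - 2*K + 2) / (2*K^2*(K-1)^2) = 1/(2*K) + 1/K^2 + 1/(2*K*(K-1)^2)" using Kp by (simp add: field_simps) (algebra?)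
    have e3: "s^2 * (1/(2*K) + 1/K^2 + 1/(2*K*(K-1)^2)) \<ge> s^2 * ((K/2 - 1/K) / (K-1)^2)"
      using i1 i2 i3 by (intro mult_left_mono) auto
    have e4: "s^2 * ((K/2 - 1/K) / (K-1)^2) \<ge> ln K * s^2 / (K-1)^2"
    proof -
      have "ln K * s^2 \<le> (K/2 - 1/K) * s^2" using lnK[OF K] by (intro mult_right_mono) auto
      hence "ln K * s^2 / (K-1)^2 \<le> (K/2 - 1/K) * s^2 / (K-1)^2" by (intro divide_right_mono) auto
      thus ?thesis by (simp add: mult.commute)
    qed
    have "ln K * s^2 / (K-1)^2 \<le> K * (Ra + 2 * Rb + Rc)" using e1 e2 e3 e4 by linarith
    thus ?thesis using sumT unfolding s_def a_def b_def c_def qa_def qb_def qc_def by simp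
  qed
qed

lemma lnpw: assumes "0 \<le> p" shows "ln (pw p p) = (if p = 0 then 0 else p * ln p)"
  using assms by (simp add: pw_def)

lemma lnpw2: assumes "0 \<le> p" shows "ln (pw p (2*p)) = 2 * (if p = 0 then 0 else p * ln p)"
  using assms by (simp add: pw_def)

lemma Tsplit: assumes "0 \<le> p" "0 < q" shows "T p q = (if p = 0 then 0 else p * ln p) - p * ln q"
  using assms by (auto simp: T_def ln_div algebra_simps)

theorem mainTheorem4:
  fixes k :: nat and r \<mu> :: real
  assumes "k \<ge> 3" and "0 < r" and "r \<le> ln (real k) / real k"
    and "0 \<le> \<mu>" and "\<mu> \<le> 1"
  shows "Gamma_r k r \<mu> \<le> (gamma_r k r)^2"
proof -
  define K where "K = real k"
  have K3: "3 \<le> K" using assms(1) unfolding K_def by simp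
  have Kp: "K > 0" "K > 1" "K - 1 > 0" "K - 2 > 0" using K3 by auto
  have rK: "r \<le> ln K / K" using assms(3) unfolding K_def .
  have m: "0 \<le> \<mu>" "\<mu> \<le> 1" using assms(4,5) .
  define LK where "LK = ln K"
  define L1 where "L1 = ln (K - 1)"
  define mm where "mm = K - 1 - \<mu>"
  define D where "D = K * (1 - \<mu> + \<mu>^2) - 1"
  define s where "s = K - 1 - K*\<mu>"
  have mmp: "mm > 0" unfolding mm_def using Kp m by simp
  have "1 - \<mu> + \<mu>^2 \<ge> 3/4"
  proof -
    have "(\<mu> - 1/2)^2 \<ge> 0" by simp
    thus ?thesis by (simp add: power2_eq_square algebra_simps)
  qed
  hence "K * (1 - \<mu> + \<mu>^2) \<ge> K * (3/4)" using Kp by (intro mult_left_mono) auto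
  hence Dp: "D > 0" unfolding D_def using K3 by linarith
  define G where "G = Gfun k \<mu>"
  have kk: "real (k - 2) = K - 2" "real (k - 1) = K - 1" "real (k - Suc 0) = K - 1" using assms(1) unfolding K_def by auto
  have G_eq: "G = K powr (1 - K) * mm ^ (k - 2) * D"
    unfolding G_def Gfun_def K_def mm_def D_def by simp
  have Gp: "G > 0" unfolding G_eq using Kp mmp Dp by simp
  have lnG: "ln G = (1 - K) * LK + (K - 2) * ln mm + ln D"
    unfolding G_eq LK_def using Kp mmp Dp by (simp add: ln_mult_pos ln_realpow kk)
  define g1 where "g1 = gfun k (1 / K)"
  have g1_eq: "g1 = ((K - 1) / K) ^ (k - 1)"
    unfolding g1_def gfun_def K_def using Kp K_def by (simp add: field_simps)
  have g1p: "g1 > 0" unfolding g1_eq using Kp by simp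
  have lng1: "ln g1 = (K - 1) * (L1 - LK)"
    unfolding g1_eq L1_def LK_def using Kp by (simp add: ln_realpow kk ln_div)
  define t0 where "t0 = (1 / K) powr (1 / K) * (1 - 1 / K) powr (1 - 1 / K)"
  have t0p: "t0 > 0" unfolding t0_def using Kp by simp
  have "1 - 1/K = (K - 1)/K" using Kp by (simp add: field_simps)
  hence lnt0: "ln t0 = (1/K) * (- LK) + (1 - 1/K) * (L1 - LK)"
    unfolding t0_def L1_def LK_def using Kp by (simp add: ln_mult_pos ln_div)
  have gam: "gamma_r k r = g1 powr r / t0" unfolding gamma_r_def g1_def t0_def K_def ..
  define a where "a = (1-\<mu>)/K"
  define b where "b = \<mu>/K"
  define c where "c = 1 - 1/K - \<mu>/K"
  define qa where "qa = 1/K^2"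
  define qb where "qb = (K-1)/K^2"
  define qc where "qc = (K-1)^2/K^2"
  have qpos: "qa > 0" "qb > 0" "qc > 0" unfolding qa_def qb_def qc_def using Kp by auto
  have "K*\<mu> \<le> K" using m Kp by (simp add: mult_left_le)
  moreover have "3*K \<le> K*K" using K3 by (intro mult_right_mono) auto
  ultimately have "K + K * \<mu> < K * K" using K3 by linarith
  hence abc: "a \<ge> 0" "b \<ge> 0" "c > 0" unfolding a_def b_def c_def using Kp m
    by (auto simp: field_simps)
  define t where "t = tfun k \<mu>"
  have t_eq: "t = pw a a * pw b (2 * b) * pw c c"
    unfolding t_def tfun_def a_def b_def c_def K_def by (simp add: mult.assoc)
  have pwpos: "pw a a > 0" "pw b (2*b) > 0" "pw c c > 0" using abc by (auto simp: pw_def)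
  have tp: "t > 0" unfolding t_eq using pwpos by simp
  define ell where "ell = (\<lambda>p::real. if p = 0 then 0 else p * ln p)"
  have lnt: "ln t = ell a + 2 * ell b + ell c"
    unfolding t_eq ell_def using pwpos abc by (simp add: ln_mult_pos lnpw lnpw2)
  have lnqa: "ln qa = - 2 * LK" unfolding qa_def LK_def using Kp by (simp add: ln_div ln_realpow)
  have lnqb: "ln qb = L1 - 2 * LK" unfolding qb_def LK_def L1_def using Kp by (simp add: ln_div ln_realpow)
  have lnqc: "ln qc = 2 * L1 - 2 * LK" unfolding qc_def LK_def L1_def using Kp by (simp add: ln_div ln_realpow)
  have KLid: "ln t - 2 * ln t0 = T a qa + 2 * T b qb + T c qc"
  proof -
    have "T a qa + 2 * T b qb + T c qc = ln t - (a * ln qa + 2 * (b * ln qb) + c * ln qc)"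
      unfolding lnt Tsplit[OF abc(1) qpos(1)] Tsplit[OF abc(2) qpos(2)] Tsplit[OF less_imp_le[OF abc(3)] qpos(3)] ell_def
      by simp
    also have "a * ln qa + 2 * (b * ln qb) + c * ln qc = 2 * ln t0"
      unfolding lnqa lnqb lnqc lnt0 a_def b_def c_def using Kp by (simp add: field_simps) (algebra?)
    finally show ?thesis by simp
  qed
  have KLb': "ln K * s^2 / (K-1)^2 \<le> K * (T a qa + 2 * T b qb + T c qc)"
    using KLb[OF K3 m] unfolding s_def a_def b_def c_def qa_def qb_def qc_def .
  have step1: "ln G - 2 * ln g1 \<le> s^2 / (K-1)^2"
  proof -
    define y1 where "y1 = K * mm / (K-1)^2"
    define y2 where "y2 = K * D / (K-1)^2"
    have y: "y1 > 0" "y2 > 0" unfolding y1_def y2_def using Kp mmp Dp by auto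
    have lny1: "ln y1 = LK + ln mm - 2 * L1" unfolding y1_def LK_def L1_def using Kp mmp
      by (simp add: ln_div ln_mult_pos ln_realpow)
    have lny2: "ln y2 = LK + ln D - 2 * L1" unfolding y2_def LK_def L1_def using Kp Dp
      by (simp add: ln_div ln_mult_pos ln_realpow)
    have "ln G - 2 * ln g1 = (K - 2) * ln y1 + ln y2"
      unfolding lnG lng1 lny1 lny2 by (simp add: algebra_simps)
    also have "\<dots> \<le> (K - 2) * (y1 - 1) + (y2 - 1)"
      using ln_le_minus_one[OF y(1)] ln_le_minus_one[OF y(2)] Kp
      by (intro add_mono mult_left_mono) auto
    also have "(K - 2) * (y1 - 1) + (y2 - 1) = s^2 / (K-1)^2"
      unfolding y1_def y2_def mm_def D_def s_def using Kp by (simp add: field_simps) (algebra?)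
    finally show ?thesis .
  qed
  have X0: "s^2 / (K-1)^2 \<ge> 0" by simp
  have "r * (ln G - 2 * ln g1) \<le> r * (s^2 / (K-1)^2)"
    using step1 assms(2) by (intro mult_left_mono) auto
  also have "\<dots> \<le> (ln K / K) * (s^2 / (K-1)^2)"
    using rK X0 by (intro mult_right_mono) auto
  also have "(ln K / K) * (s^2 / (K-1)^2) \<le> T a qa + 2 * T b qb + T c qc"
    using KLb' Kp by (simp add: field_simps)
  finally have main: "r * ln G - ln t \<le> 2 * (r * ln g1 - ln t0)"
    using KLid by (simp add: algebra_simps)
  have gexp: "gamma_r k r = exp (r * ln g1 - ln t0)" unfolding gam using g1p t0p by (simp add: powr_def exp_diff)
  have "Gamma_r k r \<mu> = exp (r * ln G - ln t)"
    unfolding Gamma_r_def G_def[symmetric] t_def[symmetric]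
    using Gp tp by (simp add: powr_def exp_diff)
  also have "\<dots> \<le> exp (2 * (r * ln g1 - ln t0))" using main by simp
  also have "\<dots> = (gamma_r k r)^2"
    unfolding gexp by (metis exp_double)
  finally show ?thesis .
qed

end
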